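(* Let $n,m\in\mathbb{N}$, $f,g\in C[0,1]$ and let $\overline{B}_{n,m}$ be the composite Bernstein operator. Then for every $k\in\{1,\dots,m\}$ and $x\in\left[\frac{k-1}{m},\frac{k}{m}\right]$, $$ \left|\overline{B}_{n,m}(fg;x)-\overline{B}_{n,m}(f;x)\,\overline{B}_{n,m}(g;x)\right|\le\frac14\,\widetilde{\omega}\left(f;2\sqrt{\tfrac{(x-\frac{k-1}{m})(\frac km-x)}{n}}\right)\widetilde{\omega}\left(g;2\sqrt{\tfrac{(x-\frac{k-1}{m})(\frac km-x)}{n}}\right). $$
   Context: For $a<b$, $f:[a,b]\to\mathbb{R}$ and $n\in\mathbb{N}$, $B_n^{[a,b]}(f;x)=\frac{1}{(b-a)^n}\sum_{i=0}^n\binom{n}{i}(x-a)^i(b-x)^{n-i}f\left(a+i\frac{b-a}{n}\right)$. For $1\le k\le m$, $\overline{B}_{n,m}(f;x):=B_n^{[\frac{k-1}{m},\frac{k}{m}]}(f;x)$ for $x\in\left[\frac{k-1}{m},\frac{k}{m}\right]$. For $f\in C[0,1]$, $\omega(f;t)=\sup\{|f(x)-f(y)|:x,y\in[0,1],|x-y|\le t\}$ is the first-order modulus of continuity, and its least concave majorant is $\widetilde{\omega}(f;t)=\sup_{0\le x\le t\le y\le1,\,x\ne y}\frac{(t-x)\omega(f,y)+(y-t)\omega(f,x)}{y-x}$ for $0\le t\le1$, and $\widetilde{\omega}(f;t)=\omega(f,1)$ for $t>1$. *)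

theory Defs
  imports "HOL-Analysis.Analysis"
begin

definition bernstein_int :: "real \<Rightarrow> real \<Rightarrow> nat \<Rightarrow> (real \<Rightarrow> real) \<Rightarrow> real \<Rightarrow> real" where
  "bernstein_int a b n f x =
     (1 / (b - a) ^ n) * (\<Sum>i=0..n. real (n choose i) * (x - a) ^ i * (b - x) ^ (n - i)
        * f (a + real i * (b - a) / real n))"

text \<open>Composite Bernstein operator; at a breakpoint k/m the smallest admissible k is used
 (both adjacent local operators interpolate f there, so the choice is immaterial).\<close>
definition comp_bernstein :: "nat \<Rightarrow> nat \<Rightarrow> (real \<Rightarrow> real) \<Rightarrow> real \<Rightarrow> real" where
  "comp_bernstein n m f x =
     (let k = (LEAST k. 1 \<le> k \<and> k \<le> m \<and> x \<le> real k / real m)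
      in bernstein_int (real (k - 1) / real m) (real k / real m) n f x)"

definition modulus :: "(real \<Rightarrow> real) \<Rightarrow> real \<Rightarrow> real" where
  "modulus f t = Sup {\<bar>f x - f y\<bar> | x y. x \<in> {0..1} \<and> y \<in> {0..1} \<and> \<bar>x - y\<bar> \<le> t}"

definition lcm_modulus :: "(real \<Rightarrow> real) \<Rightarrow> real \<Rightarrow> real" where
  "lcm_modulus f t =
     (if t \<le> 1 then
        Sup {((t - x) * modulus f y + (y - t) * modulus f x) / (y - x) | x y.
               0 \<le> x \<and> x \<le> t \<and> t \<le> y \<and> y \<le> 1 \<and> x \<noteq> y}
      else modulus f 1)"

end

theory Submission
  imports Defs
begin


definition mn :: "(nat\<Rightarrow>real) \<Rightarrow> (nat\<Rightarrow>real) \<Rightarrow> nat set \<Rightarrow> real" where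
  "mn p F A = (\<Sum>i\<in>A. p i * F i)"
definition vr :: "(nat\<Rightarrow>real) \<Rightarrow> (nat\<Rightarrow>real) \<Rightarrow> nat set \<Rightarrow> real" where
  "vr p F A = (\<Sum>i\<in>A. p i * (F i - mn p F A)^2)"

lemma vr_alt:
  assumes "sum p A = 1"
  shows "vr p F A = (\<Sum>i\<in>A. p i * (F i)^2) - (mn p F A)^2"
proof -
  have "vr p F A = (\<Sum>i\<in>A. p i * (F i)^2 - 2 * mn p F A * (p i * F i) + (mn p F A)^2 * p i)"
    unfolding vr_def by (rule sum.cong) (auto simp: power2_eq_square algebra_simps)
  also have "\<dots> = (\<Sum>i\<in>A. p i * (F i)^2) - 2 * mn p F A * mn p F A + (mn p F A)^2 * sum p A"
    by (simp add: sum.distrib sum_subtractf sum_distrib_left mn_def)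
  finally show ?thesis using assms by (simp add: power2_eq_square)
qed

lemma vr_nonneg: "(\<And>i. i \<in> A \<Longrightarrow> p i \<ge> 0) \<Longrightarrow> vr p F A \<ge> 0"
  unfolding vr_def by (intro sum_nonneg) auto

lemma vr_L2:
  assumes "\<And>i. i \<in> A \<Longrightarrow> p i \<ge> 0"
  shows "sqrt (vr p F A) = L2_set (\<lambda>i. sqrt (p i) * (F i - mn p F A)) A"
  unfolding L2_set_def vr_def
  by (rule arg_cong[where f=sqrt], rule sum.cong) (auto simp: power_mult_distrib assms)

lemma ring_aux: fixes ss qq a b c d :: real shows "ss * ss = qq \<Longrightarrow> qq * a * b - c * (qq * a) - d * (qq * b) + d * c * qq = (ss * (a-d)) * (ss * (b-c))"
  by (simp add: algebra_simps)

lemma cov_bound: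
  assumes "finite A" "sum p A = 1" "\<And>i. i \<in> A \<Longrightarrow> p i \<ge> 0"
  shows "\<bar>mn p (\<lambda>i. F i * G i) A - mn p F A * mn p G A\<bar> \<le> sqrt (vr p F A) * sqrt (vr p G A)"
proof -
  have s1: "(\<Sum>i\<in>A. mn p G A * (p i * F i)) = mn p G A * mn p F A"
    by (simp add: mn_def sum_distrib_left)
  have s2: "(\<Sum>i\<in>A. mn p F A * (p i * G i)) = mn p F A * mn p G A"
    by (simp add: mn_def sum_distrib_left)
  have s3: "(\<Sum>i\<in>A. mn p F A * mn p G A * p i) = mn p F A * mn p G A"
    using assms(2) by (simp add: sum_distrib_left[symmetric])
  have "mn p (\<lambda>i. F i * G i) A - mn p F A * mn p G A
      = (\<Sum>i\<in>A. p i * F i * G i - mn p G A * (p i * F i) - mn p F A * (p i * G i) + mn p F A * mn p G A * p i)"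
    unfolding sum.distrib sum_subtractf s1 s2 s3 by (simp add: mn_def mult.assoc)
  also have "\<dots> = (\<Sum>i\<in>A. (sqrt (p i) * (F i - mn p F A)) * (sqrt (p i) * (G i - mn p G A)))"
    by (rule sum.cong) (auto intro!: ring_aux simp: assms)
  finally have e: "mn p (\<lambda>i. F i * G i) A - mn p F A * mn p G A = \<dots>" .
  have "\<bar>\<dots>\<bar> \<le> (\<Sum>i\<in>A. \<bar>sqrt (p i) * (F i - mn p F A)\<bar> * \<bar>sqrt (p i) * (G i - mn p G A)\<bar>)"
    by (metis (no_types, lifting) abs_mult sum.cong sum_abs)
  also have "\<dots> \<le> L2_set (\<lambda>i. sqrt (p i) * (F i - mn p F A)) A * L2_set (\<lambda>i. sqrt (p i) * (G i - mn p G A)) A"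
    by (rule L2_set_mult_ineq)
  finally show ?thesis using e vr_L2[of A p] assms(3) by simp
qed

lemma sd_triangle:
  assumes "finite A" "sum p A = 1" "\<And>i. i \<in> A \<Longrightarrow> p i \<ge> 0"
  shows "sqrt (vr p F A) \<le> sqrt (vr p R A) + sqrt (vr p (\<lambda>i. F i - R i) A)"
proof -
  have m: "mn p F A = mn p R A + mn p (\<lambda>i. F i - R i) A"
    by (simp add: mn_def algebra_simps sum.distrib sum_subtractf)
  have "sqrt (vr p F A) = L2_set (\<lambda>i. sqrt (p i) * (R i - mn p R A) + sqrt (p i) * ((F i - R i) - mn p (\<lambda>i. F i - R i) A)) A"
    using vr_L2[of A p F] assms(3) m by (auto intro!: L2_set_cong simp: algebra_simps)
  also have "\<dots> \<le> sqrt (vr p R A) + sqrt (vr p (\<lambda>i. F i - R i) A)"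
  proof -
    have a: "sqrt (vr p R A) = L2_set (\<lambda>i. sqrt (p i) * (R i - mn p R A)) A"
      using vr_L2[of A p R] assms(3) by blast
    have b: "sqrt (vr p (\<lambda>i. F i - R i) A) = L2_set (\<lambda>i. sqrt (p i) * ((F i - R i) - mn p (\<lambda>i. F i - R i) A)) A"
      using vr_L2[of A p "\<lambda>i. F i - R i"] assms(3) by blast
    show ?thesis unfolding a b by (rule L2_set_triangle_ineq)
  qed
  finally show ?thesis .
qed

lemma sd_sup:
  assumes "finite A" "sum p A = 1" "\<And>i. i \<in> A \<Longrightarrow> p i \<ge> 0" "\<And>i. i \<in> A \<Longrightarrow> \<bar>D i\<bar> \<le> E" "E \<ge> 0"
  shows "sqrt (vr p D A) \<le> E"
proof -
  have "vr p D A \<le> (\<Sum>i\<in>A. p i * (D i)^2)"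
    using vr_alt[OF assms(2)] by simp
  also have "\<dots> \<le> (\<Sum>i\<in>A. p i * E^2)"
    apply (rule sum_mono) apply (rule mult_left_mono)
    using assms(3,4) by (auto) (metis abs_ge_zero power2_abs power_mono)
  also have "\<dots> = E^2" using assms(2) by (simp flip: sum_distrib_right)
  finally have "vr p D A \<le> E^2" .

  then show ?thesis using assms(5) by (simp add: real_sqrt_le_iff real_le_lsqrt)
qed

lemma pair_id:
  assumes "finite A" "sum p A = 1"
  shows "(\<Sum>i\<in>A. \<Sum>j\<in>A. p i * p j * (R i - R j)^2) = 2 * vr p R A"
proof -
  define S2 where "S2 = (\<Sum>i\<in>A. p i * (R i)^2)"
  have "(\<Sum>i\<in>A. \<Sum>j\<in>A. p i * p j * (R i - R j)^2)
      = (\<Sum>i\<in>A. \<Sum>j\<in>A. (p i * (R i)^2) * p j - 2 * (p i * R i) * (p j * R j) + p i * (p j * (R j)^2))"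
    by (intro sum.cong refl) (simp add: power2_eq_square algebra_simps)
  also have "\<dots> = (\<Sum>i\<in>A. (p i * (R i)^2) - 2 * (p i * R i) * mn p R A + p i * S2)"
    using assms by (simp add: sum.distrib sum_subtractf mn_def S2_def flip: sum_distrib_left)
  also have "\<dots> = S2 - 2 * mn p R A * mn p R A + S2"
    using assms by (simp add: sum.distrib sum_subtractf mn_def S2_def flip: sum_distrib_left sum_distrib_right)
  finally show ?thesis using vr_alt[OF assms(2), of R] by (simp add: S2_def power2_eq_square)
qed

lemma sd_lip:
  assumes "finite A" "sum p A = 1" "\<And>i. i \<in> A \<Longrightarrow> p i \<ge> 0" "L \<ge> 0"
    "\<And>i j. i \<in> A \<Longrightarrow> j \<in> A \<Longrightarrow> \<bar>R i - R j\<bar> \<le> L * \<bar>z i - z j\<bar>"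
  shows "sqrt (vr p R A) \<le> L * sqrt (vr p z A)"
proof -
  have "2 * vr p R A \<le> (\<Sum>i\<in>A. \<Sum>j\<in>A. p i * p j * (L^2 * (z i - z j)^2))"
    unfolding pair_id[OF assms(1,2), symmetric]
  proof (intro sum_mono mult_left_mono)
    fix i j assume ij: "i \<in> A" "j \<in> A"
    have "\<bar>R i - R j\<bar>^2 \<le> (L * \<bar>z i - z j\<bar>)^2"
      using assms(5)[OF ij] by (intro power_mono) auto
    then show "(R i - R j)^2 \<le> L^2 * (z i - z j)^2" by (simp add: power_mult_distrib)
    show "0 \<le> p i * p j" using assms(3) ij by simp
  qed
  also have "\<dots> = L^2 * (\<Sum>i\<in>A. \<Sum>j\<in>A. p i * p j * (z i - z j)^2)"
    by (simp add: sum_distrib_left algebra_simps)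
  also have "\<dots> = L^2 * (2 * vr p z A)" using pair_id[OF assms(1,2)] by simp
  finally have "vr p R A \<le> L^2 * vr p z A" by simp
  then have "sqrt (vr p R A) \<le> sqrt (L^2 * vr p z A)" by (rule real_sqrt_le_mono)
  then show ?thesis using assms(4) by (simp add: real_sqrt_mult)
qed

lemma Kabs:
  assumes "finite A" "A \<noteq> {}" "sum p A = 1" "\<And>i. i \<in> A \<Longrightarrow> p i \<ge> 0" "L \<ge> 0"
    "T = 2 * sqrt (vr p z A)"
    "\<And>i j. i \<in> A \<Longrightarrow> j \<in> A \<Longrightarrow> F i - F j \<le> W + L * (\<bar>z i - z j\<bar> - T)"
  shows "sqrt (vr p F A) \<le> W / 2"
proof -
  define U where "U i = Max ((\<lambda>j. F j - L * \<bar>z i - z j\<bar>) ` A)" for i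
  define Lo where "Lo i = Min ((\<lambda>j. F j + L * \<bar>z i - z j\<bar>) ` A)" for i
  define R where "R i = (U i + Lo i) / 2" for i
  have fin: "finite ((\<lambda>j. F j - L * \<bar>z i - z j\<bar>) ` A)" "finite ((\<lambda>j. F j + L * \<bar>z i - z j\<bar>) ` A)" for i
    using assms(1) by auto
  have ne: "((\<lambda>j. F j - L * \<bar>z i - z j\<bar>) ` A) \<noteq> {}" "((\<lambda>j. F j + L * \<bar>z i - z j\<bar>) ` A) \<noteq> {}" for i
    using assms(2) by auto
  have Uge: "F j - L * \<bar>z i - z j\<bar> \<le> U i" if "j \<in> A" for i j
    unfolding U_def using fin that by (intro Max_ge) auto
  have Lole: "Lo i \<le> F j + L * \<bar>z i - z j\<bar>" if "j \<in> A" for i j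
    unfolding Lo_def using fin that by (intro Min_le) auto
  obtain jU where jU: "\<And>i. jU i \<in> A" "\<And>i. U i = F (jU i) - L * \<bar>z i - z (jU i)\<bar>"
  proof -
    have "\<forall>i. \<exists>j\<in>A. U i = F j - L * \<bar>z i - z j\<bar>"
      using Max_in[OF fin(1) ne(1)] unfolding U_def by (auto simp: image_iff)
    then show ?thesis using that by metis
  qed
  obtain jL where jL: "\<And>i. jL i \<in> A" "\<And>i. Lo i = F (jL i) + L * \<bar>z i - z (jL i)\<bar>"
  proof -
    have "\<forall>i. \<exists>j\<in>A. Lo i = F j + L * \<bar>z i - z j\<bar>"
      using Min_in[OF fin(2) ne(2)] unfolding Lo_def by (auto simp: image_iff)
    then show ?thesis using that by metis
  qed
  obtain i0 where i0: "i0 \<in> A" using assms(2) by auto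
  have WLT: "W - L * T \<ge> 0" using assms(7)[OF i0 i0] by simp
  have FR: "\<bar>F i - R i\<bar> \<le> (W - L * T) / 2" if "i \<in> A" for i
  proof -
    have a: "Lo i \<le> F i" "F i \<le> U i" using Uge[OF that, of i] Lole[OF that, of i] by auto
    have "\<bar>z (jU i) - z (jL i)\<bar> \<le> \<bar>z i - z (jU i)\<bar> + \<bar>z i - z (jL i)\<bar>" by simp
    then have "L * \<bar>z (jU i) - z (jL i)\<bar> \<le> L * \<bar>z i - z (jU i)\<bar> + L * \<bar>z i - z (jL i)\<bar>"
      using assms(5) by (metis distrib_left mult_left_mono)
    moreover have "F (jU i) - F (jL i) \<le> W + L * (\<bar>z (jU i) - z (jL i)\<bar> - T)"
      using assms(7) jU(1) jL(1) by blast
    ultimately have "U i - Lo i \<le> W - L * T" using jU(2)[of i] jL(2)[of i] by (simp add: algebra_simps)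
    then show ?thesis using a unfolding R_def by (simp add: abs_le_iff field_simps)
  qed
  have RL: "\<bar>R i - R k\<bar> \<le> L * \<bar>z i - z k\<bar>" if "i \<in> A" "k \<in> A" for i k
  proof -
    have Ul: "U a \<ge> U b - L * \<bar>z a - z b\<bar>" for a b
    proof -
      have "U a \<ge> F (jU b) - L * \<bar>z a - z (jU b)\<bar>" by (rule Uge[OF jU(1)])
      moreover have "L * \<bar>z a - z (jU b)\<bar> \<le> L * \<bar>z b - z (jU b)\<bar> + L * \<bar>z a - z b\<bar>"
      proof -
        have "\<bar>z a - z (jU b)\<bar> \<le> \<bar>z b - z (jU b)\<bar> + \<bar>z a - z b\<bar>" by arith
        from mult_left_mono[OF this assms(5)] show ?thesis by (simp add: distrib_left)
      qed
      ultimately show ?thesis using jU(2)[of b] by simp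
    qed
    have Ll: "Lo a \<le> Lo b + L * \<bar>z a - z b\<bar>" for a b
    proof -
      have "Lo a \<le> F (jL b) + L * \<bar>z a - z (jL b)\<bar>" by (rule Lole[OF jL(1)])
      moreover have "L * \<bar>z a - z (jL b)\<bar> \<le> L * \<bar>z b - z (jL b)\<bar> + L * \<bar>z a - z b\<bar>"
      proof -
        have "\<bar>z a - z (jL b)\<bar> \<le> \<bar>z b - z (jL b)\<bar> + \<bar>z a - z b\<bar>" by arith
        from mult_left_mono[OF this assms(5)] show ?thesis by (simp add: distrib_left)
      qed
      ultimately show ?thesis using jL(2)[of b] by simp
    qed
    show ?thesis using Ul[of i k] Ul[of k i] Ll[of i k] Ll[of k i] unfolding R_def
      by (simp add: abs_le_iff abs_minus_commute field_simps)
  qed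
  have "sqrt (vr p F A) \<le> sqrt (vr p R A) + sqrt (vr p (\<lambda>i. F i - R i) A)"
    by (rule sd_triangle[OF assms(1,3,4)])
  also have "\<dots> \<le> L * sqrt (vr p z A) + (W - L * T) / 2"
    by (intro add_mono sd_lip[OF assms(1,3,4,5)] sd_sup[OF assms(1,3,4)] RL FR) (use WLT in auto)
  also have "\<dots> = W / 2" using assms(6) by (simp add: field_simps)
  finally show ?thesis .
qed



lemma cont_bdd:
  assumes "continuous_on {0..1} (f::real\<Rightarrow>real)"
  obtains M where "\<And>x. x \<in> {0..1} \<Longrightarrow> \<bar>f x\<bar> \<le> M"
proof -
  have "compact (f ` {0..1})" by (rule compact_continuous_image[OF assms]) simp
  then have "bounded (f ` {0..1})" by (rule compact_imp_bounded)
  then obtain M where "\<forall>y\<in>f ` {0..1}. norm y \<le> M" by (auto simp: bounded_iff)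
  then show ?thesis by (intro that[of M]) auto
qed

lemma mod_bdd:
  assumes "continuous_on {0..1} (f::real\<Rightarrow>real)"
  shows "bdd_above {\<bar>f x - f y\<bar> | x y. x \<in> {0..1} \<and> y \<in> {0..1} \<and> \<bar>x - y\<bar> \<le> t}"
proof -
  obtain M where M: "\<And>x. x \<in> {0..1} \<Longrightarrow> \<bar>f x\<bar> \<le> M" using cont_bdd[OF assms] by blast
  show ?thesis
  proof (rule bdd_aboveI[of _ "2*M"])
    fix r assume "r \<in> {\<bar>f x - f y\<bar> | x y. x \<in> {0..1} \<and> y \<in> {0..1} \<and> \<bar>x - y\<bar> \<le> t}"
    then obtain x y where "r = \<bar>f x - f y\<bar>" "x \<in> {0..1}" "y \<in> {0..1}" by blast
    then show "r \<le> 2*M" using M[of x] M[of y] by linarith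
  qed
qed

lemma W1:
  assumes "continuous_on {0..1} f" "u \<in> {0..1}" "v \<in> {0..1}" "\<bar>u - v\<bar> \<le> h"
  shows "\<bar>f u - f v\<bar> \<le> modulus f h"
  unfolding modulus_def
  by (rule cSup_upper[OF _ mod_bdd[OF assms(1)]]) (use assms in blast)

lemma W2:
  assumes "continuous_on {0..1} f" "0 \<le> h" "h \<le> h'"
  shows "modulus f h \<le> modulus f h'"
  unfolding modulus_def[of f h]
proof (rule cSup_least)
  show "{\<bar>f x - f y\<bar> | x y. x \<in> {0..1} \<and> y \<in> {0..1} \<and> \<bar>x - y\<bar> \<le> h} \<noteq> {}"
    using assms(2) by (auto intro!: exI[of _ 0])
  fix r assume "r \<in> {\<bar>f x - f y\<bar> | x y. x \<in> {0..1} \<and> y \<in> {0..1} \<and> \<bar>x - y\<bar> \<le> h}"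
  then obtain x y where "r = \<bar>f x - f y\<bar>" "x \<in> {0..1}" "y \<in> {0..1}" "\<bar>x - y\<bar> \<le> h'"
    using assms(3) by force
  then show "r \<le> modulus f h'" using W1[OF assms(1)] by blast
qed

lemma W3:
  assumes "continuous_on {0..1} f" "0 \<le> h"
  shows "0 \<le> modulus f h"
  using W1[OF assms(1), of 0 0 h] assms(2) by simp

lemma W4:
  assumes "continuous_on {0..1} f" "0 \<le> u" "u \<le> T" "T \<le> v" "v \<le> 1" "u \<noteq> v"
  shows "((T - u) * modulus f v + (v - T) * modulus f u) / (v - u) \<le> lcm_modulus f T"
proof -
  have T1: "T \<le> 1" using assms by linarith
  let ?S = "{((T - x) * modulus f y + (y - T) * modulus f x) / (y - x) | x y.
               0 \<le> x \<and> x \<le> T \<and> T \<le> y \<and> y \<le> 1 \<and> x \<noteq> y}"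
  have "bdd_above ?S"
  proof (rule bdd_aboveI[of _ "modulus f 1"])
    fix r assume "r \<in> ?S"
    then obtain x y where r: "r = ((T - x) * modulus f y + (y - T) * modulus f x) / (y - x)"
      "0 \<le> x" "x \<le> T" "T \<le> y" "y \<le> 1" "x \<noteq> y" by blast
    have "(T - x) * modulus f y \<le> (T - x) * modulus f 1"
      using r W2[OF assms(1), of y 1] by (intro mult_left_mono) auto
    moreover have "(y - T) * modulus f x \<le> (y - T) * modulus f 1"
      using r W2[OF assms(1), of x 1] by (intro mult_left_mono) auto
    ultimately have "(T - x) * modulus f y + (y - T) * modulus f x \<le> (y - x) * modulus f 1"
      by (simp add: algebra_simps)
    moreover have "y - x > 0" using r by auto
    ultimately show "r \<le> modulus f 1" using r by (simp add: pos_divide_le_eq mult.commute)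
  qed
  then have "((T - u) * modulus f v + (v - T) * modulus f u) / (v - u) \<le> Sup ?S"
    by (rule cSup_upper[rotated]) (use assms in blast)
  then show ?thesis unfolding lcm_modulus_def using T1 by simp
qed

lemma Lexist:
  assumes "continuous_on {0..1} f" "finite D" "D \<subseteq> {0..1}" "0 \<le> T" "T \<le> 1"
  shows "\<exists>L\<ge>0. \<forall>h\<in>D. modulus f h \<le> lcm_modulus f T + L * (h - T)"
proof -
  define W where "W = lcm_modulus f T"
  define \<omega> where "\<omega> = modulus f"
  define L where "L = Max (insert 0 ((\<lambda>h. (\<omega> h - W) / (h - T)) ` {h\<in>D. h > T}))"
  have finS: "finite (insert 0 ((\<lambda>h. (\<omega> h - W) / (h - T)) ` {h\<in>D. h > T}))" using assms(2) by auto
  have L0: "L \<ge> 0" unfolding L_def using finS by (intro Max_ge) auto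
  have wT: "\<omega> T \<le> W"
  proof (cases "T < 1")
    case True
    from W4[OF assms(1), of T T 1] True assms
    show ?thesis by (simp add: \<omega>_def W_def)
  next
    case False
    then have "T = 1" using assms by simp
    with W4[OF assms(1) order_refl, of T 1] show ?thesis by (simp add: \<omega>_def W_def)
  qed
  have "\<omega> h \<le> W + L * (h - T)" if h: "h \<in> D" for h
  proof (cases h T rule: linorder_cases)
    case greater
    then have "(\<omega> h - W) / (h - T) \<le> L" unfolding L_def using finS h by (intro Max_ge) auto
    then show ?thesis using greater by (simp add: divide_simps)
  next
    case equal
    then show ?thesis using wT by simp
  next
    case less
    have h01: "0 \<le> h" using h assms(3) by auto
    have "L \<le> (W - \<omega> h) / (T - h)"
      unfolding L_def
    proof (rule Max.boundedI[OF finS])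
      show "insert 0 ((\<lambda>h. (\<omega> h - W) / (h - T)) ` {h\<in>D. h > T}) \<noteq> {}" by simp
      fix r assume "r \<in> insert 0 ((\<lambda>h. (\<omega> h - W) / (h - T)) ` {h\<in>D. h > T})"
      then consider "r = 0" | "r \<in> (\<lambda>h. (\<omega> h - W) / (h - T)) ` {h\<in>D. h > T}" by blast
      then show "r \<le> (W - \<omega> h) / (T - h)"
      proof cases
        case 1
        have "\<omega> h \<le> \<omega> T" unfolding \<omega>_def using W2[OF assms(1) h01] less by simp
        then show ?thesis using wT less 1 by simp
      next
        case 2
        then obtain h' where h': "h' \<in> D" "h' > T" "r = (\<omega> h' - W) / (h' - T)" by auto
        have "h' \<le> 1" using h' assms(3) by auto
        then have "((T - h) * \<omega> h' + (h' - T) * \<omega> h) / (h' - h) \<le> W"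
          using W4[OF assms(1) h01, of T h'] less h' by (simp add: \<omega>_def W_def)
        then have "(T - h) * \<omega> h' + (h' - T) * \<omega> h \<le> W * (h' - h)"
          using less h' by (simp add: divide_simps)
        then have "(T - h) * (\<omega> h' - W) \<le> (h' - T) * (W - \<omega> h)" by (simp add: algebra_simps)
        moreover have "\<omega> h' - W = r * (h' - T)" using h' by simp
        ultimately have "(h' - T) * (r * (T - h)) \<le> (h' - T) * (W - \<omega> h)"
          by (simp add: ac_simps)
        then have "r * (T - h) \<le> W - \<omega> h"
          using h' by (meson mult_left_le_imp_le diff_gt_0_iff_gt less_imp_le)
        then show ?thesis using less by (simp add: pos_le_divide_eq)
      qed
    qed
    then have "L * (T - h) \<le> W - \<omega> h" using less by (simp add: divide_simps)
    then show ?thesis by (simp add: algebra_simps)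
  qed
  then show ?thesis using L0 unfolding \<omega>_def W_def by blast
qed



lemma sd_bound:
  assumes "continuous_on {0..1} f" "finite A" "A \<noteq> {}" "sum p A = 1" "\<And>i. i \<in> A \<Longrightarrow> p i \<ge> 0"
    "\<And>i. i \<in> A \<Longrightarrow> z i \<in> {0..1}" "T = 2 * sqrt (vr p z A)" "T \<le> 1"
  shows "sqrt (vr p (\<lambda>i. f (z i)) A) \<le> lcm_modulus f T / 2"
proof -
  define D where "D = (\<lambda>(i,j). \<bar>z i - z j\<bar>) ` (A \<times> A)"
  have "finite D" unfolding D_def using assms(2) by auto
  moreover have "D \<subseteq> {0..1}"
  proof
    fix h assume "h \<in> D"
    then obtain i j where "i \<in> A" "j \<in> A" "h = \<bar>z i - z j\<bar>" unfolding D_def by auto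
    then show "h \<in> {0..1}" using assms(6)[of i] assms(6)[of j] by (auto simp: abs_le_iff)
  qed
  moreover have "0 \<le> T" using assms(7) vr_nonneg[of A p z] assms(5) by simp
  ultimately have "\<exists>L\<ge>0. \<forall>h\<in>D. modulus f h \<le> lcm_modulus f T + L * (h - T)"
    by (rule Lexist[OF assms(1) _ _ _ assms(8)])
  then obtain L where L: "L \<ge> 0" "\<And>h. h \<in> D \<Longrightarrow> modulus f h \<le> lcm_modulus f T + L * (h - T)"
    by blast
  show ?thesis
  proof (rule Kabs[OF assms(2,3,4,5) L(1) assms(7)])
    fix i j assume ij: "i \<in> A" "j \<in> A"
    have "f (z i) - f (z j) \<le> modulus f \<bar>z i - z j\<bar>"
      using W1[OF assms(1) assms(6)[OF ij(1)] assms(6)[OF ij(2)] order_refl] by simp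
    also have "\<dots> \<le> lcm_modulus f T + L * (\<bar>z i - z j\<bar> - T)"
    proof (rule L(2))
      show "\<bar>z i - z j\<bar> \<in> D" unfolding D_def using ij by force
    qed
    finally show "f (z i) - f (z j) \<le> lcm_modulus f T + L * (\<bar>z i - z j\<bar> - T)" .
  qed
qed

lemma sum_bern: "(\<Sum>k\<le>n. (x - k/n)\<^sup>2 * Bernstein n k x) = x * (1 - x) / n" if n: "n \<ge> 1"
proof -
  have *: "\<And>a b x::real. (a - b)\<^sup>2 * x = a * (a - 1) * x + (1 - 2 * b) * a * x + b * b * x"
    by (simp add: algebra_simps power2_eq_square)
  have "(\<Sum>k\<le>n. (k - n * x)\<^sup>2 * Bernstein n k x) = n * x * (1 - x)"
    apply (simp add: * sum.distrib)
    apply (simp flip: sum_distrib_left add: mult.assoc)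
    apply (simp add: algebra_simps power2_eq_square)
    done
  then have "(\<Sum>k\<le>n. (k - n * x)\<^sup>2 * Bernstein n k x)/n^2 = x * (1 - x) / n"
    by (simp add: power2_eq_square)
  then show ?thesis
    using n by (simp add: sum_divide_distrib field_split_simps power2_commute)
qed

lemma bern_main:
  assumes f: "continuous_on {0..1} f" and g: "continuous_on {0..1} g" and n: "n \<ge> 1"
    and ab: "0 \<le> a" "a < b" "b \<le> 1" and x: "a \<le> x" "x \<le> b"
  shows "\<bar>bernstein_int a b n (\<lambda>t. f t * g t) x - bernstein_int a b n f x * bernstein_int a b n g x\<bar>
    \<le> 1/4 * lcm_modulus f (2 * sqrt ((x - a) * (b - x) / real n))
          * lcm_modulus g (2 * sqrt ((x - a) * (b - x) / real n))"
proof -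
  define u where "u = (x - a) / (b - a)"
  define p where "p k = Bernstein n k u" for k
  define z where "z k = a + real k * (b - a) / real n" for k
  have u01: "0 \<le> u" "u \<le> 1" using ab x by (auto simp: u_def divide_simps)
  have bu: "(b - a) * u = x - a" using ab by (simp add: u_def)
  have bu2: "(b - a) * (1 - u) = b - x" using bu by (simp add: algebra_simps)
  have p0: "p k \<ge> 0" for k using u01 by (simp add: p_def Bernstein_nonneg)
  have p1: "sum p {..n} = 1" by (simp add: p_def)
  have z01: "z k \<in> {0..1}" if "k \<in> {..n}" for k
  proof -
    have "real k * (b - a) / real n \<le> (b - a)"
      using that n ab by (simp add: divide_simps mult_right_mono)
    moreover have "0 \<le> real k * (b - a) / real n" using ab by simp
    ultimately show ?thesis using ab unfolding z_def by auto
  qed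
  have beq: "bernstein_int a b n h x = mn p (\<lambda>k. h (z k)) {..n}" for h
  proof -
    have "bernstein_int a b n h x = (\<Sum>k\<le>n. 1 / (b - a) ^ n * (real (n choose k) * (x - a) ^ k * (b - x) ^ (n - k) * h (z k)))"
      unfolding bernstein_int_def z_def by (simp add: atLeast0AtMost sum_distrib_left)
    also have "\<dots> = mn p (\<lambda>k. h (z k)) {..n}"
      unfolding mn_def
    proof (rule sum.cong[OF refl])
      fix k assume "k \<in> {..n}"
      then have kn: "n = k + (n - k)" by simp
      have pw: "(b - a) ^ k * (b - a) ^ (n - k) = (b - a) ^ n" by (metis power_add kn)
      have u1: "1 - u = (b - x) / (b - a)" using ab by (simp add: u_def divide_simps)
      have "p k = real (n choose k) * ((x - a) / (b - a)) ^ k * ((b - x) / (b - a)) ^ (n - k)"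
        unfolding p_def Bernstein_def u1 by (simp add: u_def)
      also have "\<dots> = real (n choose k) * (x - a) ^ k * (b - x) ^ (n - k) / ((b - a) ^ k * (b - a) ^ (n - k))"
        by (simp add: power_divide)
      also have "\<dots> = real (n choose k) * (x - a) ^ k * (b - x) ^ (n - k) / (b - a) ^ n"
        by (simp only: pw)
      finally have pk: "p k = real (n choose k) * (x - a) ^ k * (b - x) ^ (n - k) / (b - a) ^ n" .
      show "1 / (b - a) ^ n * (real (n choose k) * (x - a) ^ k * (b - x) ^ (n - k) * h (z k)) = p k * h (z k)"
        unfolding pk by simp
    qed
    finally show ?thesis .
  qed
  have mz: "mn p z {..n} = x"
  proof -
    have "mn p z {..n} = (\<Sum>k\<le>n. a * p k + (b - a) / real n * (real k * p k))"
      unfolding mn_def z_def by (intro sum.cong refl) (simp add: algebra_simps)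
    also have "\<dots> = a * sum p {..n} + (b - a) / real n * (\<Sum>k\<le>n. real k * p k)"
      unfolding sum.distrib sum_distrib_left by simp
    also have "\<dots> = a + (b - a) / real n * (real n * u)"
      unfolding p1 p_def sum_k_Bernstein by simp
    also have "\<dots> = x"
    proof -
      have "b - a \<noteq> 0" using ab by simp
      then have "(b - a) * u = x - a" by (simp add: u_def)
      then show ?thesis using n by simp
    qed
    finally show ?thesis .
  qed
  have vz: "vr p z {..n} = (x - a) * (b - x) / real n"
  proof -
    have "vr p z {..n} = (\<Sum>k\<le>n. (b - a)^2 * ((u - k / n)\<^sup>2 * Bernstein n k u))"
      unfolding vr_def mz
    proof (intro sum.cong refl)
      fix k
      have "z k - x = (b - a) * (real k / real n) - (b - a) * u" unfolding bu by (simp add: z_def)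
      then have "z k - x = (b - a) * (real k / real n - u)" by (simp add: right_diff_distrib)
      then show "p k * (z k - x)\<^sup>2 = (b - a)\<^sup>2 * ((u - real k / real n)\<^sup>2 * Bernstein n k u)"
        by (simp add: p_def power_mult_distrib power2_commute)
    qed
    also have "\<dots> = (b - a)^2 * (u * (1 - u) / n)" using sum_bern[OF n] by (simp flip: sum_distrib_left)
    also have "\<dots> = ((b - a) * u) * ((b - a) * (1 - u)) / real n" by (simp add: power2_eq_square)
    also have "\<dots> = (x - a) * (b - x) / real n" unfolding bu bu2 ..
    finally show ?thesis .
  qed
  define T where "T = 2 * sqrt ((x - a) * (b - x) / real n)"
  have T: "T = 2 * sqrt (vr p z {..n})" by (simp add: T_def vz)
  have "(x - a) * (b - x) / real n \<le> 1/4"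
  proof -
    have e: "(b - a)^2 / 4 - (x - a) * (b - x) = ((x - a) - (b - x))^2 / 4"
      by (simp add: power2_eq_square field_simps)
    have "(x - a) * (b - x) \<le> (b - a)^2 / 4" using e by (smt (verit) zero_le_power2 divide_nonneg_pos)
    also have "\<dots> \<le> 1/4" using ab by (simp add: power_le_one)
    finally have h1: "(x - a) * (b - x) \<le> 1/4" .
    have h0: "0 \<le> (x - a) * (b - x)" using x by simp
    have "(x - a) * (b - x) / real n \<le> (x - a) * (b - x) / 1"
      using n h0 by (intro frac_le) auto
    then show ?thesis using h1 by linarith
  qed
  then have "sqrt ((x - a) * (b - x) / real n) \<le> sqrt (1/4)" by (rule real_sqrt_le_mono)
  moreover have "sqrt (1/4) = (1/2::real)" by (rule real_sqrt_unique) (auto simp: power2_eq_square)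
  ultimately have T1: "T \<le> 1" unfolding T_def by simp
  have sf: "sqrt (vr p (\<lambda>i. f (z i)) {..n}) \<le> lcm_modulus f T / 2"
    by (rule sd_bound[OF f _ _ p1 p0 z01 T T1]) auto
  have sg: "sqrt (vr p (\<lambda>i. g (z i)) {..n}) \<le> lcm_modulus g T / 2"
    by (rule sd_bound[OF g _ _ p1 p0 z01 T T1]) auto
  have "\<bar>bernstein_int a b n (\<lambda>t. f t * g t) x - bernstein_int a b n f x * bernstein_int a b n g x\<bar>
     \<le> sqrt (vr p (\<lambda>i. f (z i)) {..n}) * sqrt (vr p (\<lambda>i. g (z i)) {..n})"
    unfolding beq using cov_bound[of "{..n}" p "\<lambda>i. f (z i)" "\<lambda>i. g (z i)"] p0 p1 by simp
  also have "\<dots> \<le> (lcm_modulus f T / 2) * (lcm_modulus g T / 2)"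
  proof (rule mult_mono[OF sf sg])
    have "0 \<le> sqrt (vr p (\<lambda>i. f (z i)) {..n})" using vr_nonneg[of "{..n}" p] p0 by simp
    then show "0 \<le> lcm_modulus f T / 2" using sf by linarith
    show "0 \<le> sqrt (vr p (\<lambda>i. g (z i)) {..n})" using vr_nonneg[of "{..n}" p] p0 by simp
  qed
  finally show ?thesis unfolding T_def by simp
qed



theorem mainTheorem3:
  fixes n m k :: nat and f g :: "real \<Rightarrow> real" and x :: real
  assumes "n \<ge> 1" and "m \<ge> 1"
    and "continuous_on {0..1} f" and "continuous_on {0..1} g"
    and "1 \<le> k" and "k \<le> m"
    and "real (k - 1) / real m \<le> x" and "x \<le> real k / real m"
  shows "\<bar>comp_bernstein n m (\<lambda>t. f t * g t) x - comp_bernstein n m f x * comp_bernstein n m g x\<bar>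
    \<le> 1/4 * lcm_modulus f (2 * sqrt ((x - real (k - 1) / real m) * (real k / real m - x) / real n))
          * lcm_modulus g (2 * sqrt ((x - real (k - 1) / real m) * (real k / real m - x) / real n))"
proof -
  define K where "K = (LEAST k. 1 \<le> k \<and> k \<le> m \<and> x \<le> real k / real m)"
  have PK: "1 \<le> K \<and> K \<le> m \<and> x \<le> real K / real m"
    unfolding K_def by (rule LeastI[of _ k]) (use assms in auto)
  have Kk: "K \<le> k" unfolding K_def by (rule Least_le) (use assms in auto)
  define a where "a = real (K - 1) / real m"
  define b where "b = real K / real m"
  have cb: "comp_bernstein n m h x = bernstein_int a b n h x" for h
    unfolding comp_bernstein_def K_def[symmetric] a_def b_def Let_def ..
  have m0: "real m > 0" using assms(2) by simp
  have a0: "0 \<le> a" unfolding a_def using m0 by simp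
  have ab: "a < b" unfolding a_def b_def using PK m0 by (simp add: divide_strict_right_mono of_nat_diff)
  have b1: "b \<le> 1" unfolding b_def using PK m0 by simp
  have xb: "x \<le> b" unfolding b_def using PK by simp
  have "real (K - 1) \<le> real (k - 1)" using Kk by simp
  then have "a \<le> real (k - 1) / real m" unfolding a_def using m0 by (simp add: divide_right_mono)
  then have xa: "a \<le> x" using assms(7) by simp
  have eq: "(x - a) * (b - x) = (x - real (k - 1) / real m) * (real k / real m - x)"
  proof (cases "K = k")
    case True then show ?thesis unfolding a_def b_def by simp
  next
    case False
    then have "K \<le> k - 1" using Kk by simp
    then have "real K \<le> real (k - 1)" by simp
    then have "b \<le> real (k - 1) / real m" unfolding b_def using m0 by (simp add: divide_right_mono)
    then have "x = b" "x = real (k - 1) / real m" using xb assms(7) by auto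
    then show ?thesis by simp
  qed
  show ?thesis
    unfolding cb eq[symmetric]
    by (rule bern_main[OF assms(3,4,1) a0 ab b1 xa xb])
qed

end
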